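(* Let $\delta>0$ and $\beta:[0,+\infty)\to(0,+\infty)$ continuously differentiable, strictly decreasing, with $\lim_{S\to+\infty}\beta(S)=0$, and $\delta<\beta(0)$. Let $\chi:[0,+\infty)\to(-\infty,0]$, $\chi(y)=y\beta'(y)$, and assume (H$_1$) $\chi$ is decreasing on $[0,\beta^{-1}(\delta)]$; (H$_2$) $\chi(\beta^{-1}(\delta))<-4\delta$. Then there exists a unique $\tau^*\in(0,\bar\tau)$ such that, for $\tau\in[0,\bar\tau)$, the inequality $$\frac{4\delta e^{-\delta\tau}}{2e^{-\delta\tau}-1}+(2e^{-\delta\tau}-1)\,\chi\!\left(\beta^{-1}\!\Big(\frac{\delta}{2e^{-\delta\tau}-1}\Big)\right)<0$$ holds if and only if $\tau\in[0,\tau^* )$.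
   Context: $\bar\tau:=\frac1\delta\ln\!\big(\frac{2\beta(0)}{\delta+\beta(0)}\big)$; $\beta^{-1}:(0,\beta(0)]\to[0,\infty)$ is the inverse function of $\beta$. For $\tau\in[0,\bar\tau)$ one has $2e^{-\delta\tau}-1>0$ and $\delta\le \frac{\delta}{2e^{-\delta\tau}-1}<\beta(0)$. *)

theory Defs
  imports Complex_Main
begin

definition beta_inv :: "(real \<Rightarrow> real) \<Rightarrow> real \<Rightarrow> real" where
  "beta_inv \<beta> x = inv_into {0..} \<beta> x"

definition tau_bar :: "real \<Rightarrow> (real \<Rightarrow> real) \<Rightarrow> real" where
  "tau_bar \<delta> \<beta> = (1 / \<delta>) * ln (2 * \<beta> 0 / (\<delta> + \<beta> 0))"

end

theory Submission
  imports Defs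
begin

theorem lemma5p2:
  fixes \<delta> :: real and \<beta> \<beta>' \<chi> :: "real \<Rightarrow> real"
  assumes delta_pos: "\<delta> > 0"
    and beta_pos: "\<forall>y\<ge>0. \<beta> y > 0"
    and beta_deriv: "\<forall>y\<ge>0. (\<beta> has_real_derivative \<beta>' y) (at y within {0..})"
    and beta'_cont: "continuous_on {0..} \<beta>'"
    and beta_strict_dec: "\<forall>x y. 0 \<le> x \<and> x < y \<longrightarrow> \<beta> y < \<beta> x"
    and beta_lim: "(\<beta> \<longlongrightarrow> 0) at_top"
    and delta_lt: "\<delta> < \<beta> 0"
    and chi_def: "\<forall>y\<ge>0. \<chi> y = y * \<beta>' y"
    and H1: "\<forall>x y. 0 \<le> x \<and> x \<le> y \<and> y \<le> beta_inv \<beta> \<delta> \<longrightarrow> \<chi> y \<le> \<chi> x"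
    and H2: "\<chi> (beta_inv \<beta> \<delta>) < - 4 * \<delta>"
  shows "\<exists>!\<tau>s. 0 < \<tau>s \<and> \<tau>s < tau_bar \<delta> \<beta> \<and>
           (\<forall>\<tau>. 0 \<le> \<tau> \<and> \<tau> < tau_bar \<delta> \<beta> \<longrightarrow>
              (4 * \<delta> * exp (- \<delta> * \<tau>) / (2 * exp (- \<delta> * \<tau>) - 1)
                 + (2 * exp (- \<delta> * \<tau>) - 1)
                   * \<chi> (beta_inv \<beta> (\<delta> / (2 * exp (- \<delta> * \<tau>) - 1))) < 0
               \<longleftrightarrow> \<tau> < \<tau>s))"
proof -
  define P where "P = (\<lambda>\<tau>s. 0 < \<tau>s \<and> \<tau>s < tau_bar \<delta> \<beta> \<and>
           (\<forall>\<tau>. 0 \<le> \<tau> \<and> \<tau> < tau_bar \<delta> \<beta> \<longrightarrow>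
              (4 * \<delta> * exp (- \<delta> * \<tau>) / (2 * exp (- \<delta> * \<tau>) - 1)
                 + (2 * exp (- \<delta> * \<tau>) - 1)
                   * \<chi> (beta_inv \<beta> (\<delta> / (2 * exp (- \<delta> * \<tau>) - 1))) < 0
               \<longleftrightarrow> \<tau> < \<tau>s)))"
  have cb: "continuous_on {0..} \<beta>"
    by (rule DERIV_continuous_on) (use beta_deriv in auto)
  have cchi: "continuous_on {0..} \<chi>"
  proof -
    have "continuous_on {0..} (\<lambda>y. y * \<beta>' y)"
      by (intro continuous_intros beta'_cont)
    then show ?thesis using chi_def by (auto intro: continuous_on_cong[THEN iffD1, rotated 2])
  qed
  have surj: "v \<in> \<beta> ` {0..}" if v: "0 < v" "v \<le> \<beta> 0" for v
  proof -
    have "eventually (\<lambda>x. \<beta> x < v) at_top"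
      using beta_lim v(1) by (rule order_tendstoD)
    then obtain N where N: "\<And>x. x \<ge> N \<Longrightarrow> \<beta> x < v" by (auto simp: eventually_at_top_linorder)
    define b where "b = max N 0"
    have "\<beta> b \<le> v" using N[of b] by (simp add: b_def)
    moreover have "continuous_on {0..b} \<beta>" using cb by (rule continuous_on_subset) auto
    ultimately obtain x where "0 \<le> x" "x \<le> b" "\<beta> x = v"
      using IVT2'[of \<beta> b v 0] v b_def by auto
    then show ?thesis by auto
  qed
  have inj: "inj_on \<beta> {0..}"
    by (rule inj_onI) (metis atLeast_iff beta_strict_dec less_irrefl linorder_neqE_linordered_idom)
  have binv: "\<beta> (beta_inv \<beta> v) = v" "beta_inv \<beta> v \<ge> 0" if "0 < v" "v \<le> \<beta> 0" for v
    using surj[OF that] inv_into_into[of v \<beta> "{0..}"] f_inv_into_f[of v \<beta> "{0..}"]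
    unfolding beta_inv_def by auto
  define yd where "yd = beta_inv \<beta> \<delta>"
  have byd: "\<beta> yd = \<delta>" "yd \<ge> 0" using binv[of \<delta>] delta_pos delta_lt by (auto simp: yd_def)
  have ydpos: "yd > 0" using byd delta_lt by (metis less_irrefl order_le_less)
  have mono_le: "x \<le> y" if "0 \<le> x" "0 \<le> y" "\<beta> y \<le> \<beta> x" for x y
    using beta_strict_dec that by (metis not_le)
  define g where "g = (\<lambda>y. 2 * \<beta> y + 2 * (\<beta> y)\<^sup>2 / \<delta> + \<chi> y)"
  have gdec: "g y < g x" if "0 \<le> x" "x < y" "y \<le> yd" for x y
  proof -
    have b1: "\<beta> y < \<beta> x" using beta_strict_dec that by auto
    have b0: "0 < \<beta> y" using beta_pos that by auto
    have "(\<beta> y)\<^sup>2 < (\<beta> x)\<^sup>2" using b1 b0 by (simp add: power_strict_mono)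
    hence "2 * (\<beta> y)\<^sup>2 / \<delta> < 2 * (\<beta> x)\<^sup>2 / \<delta>" using delta_pos by (simp add: divide_strict_right_mono)
    moreover have "\<chi> y \<le> \<chi> x" using H1 that yd_def by auto
    ultimately show ?thesis using b1 by (simp add: g_def)
  qed
  have cg: "continuous_on {0..yd} g"
  proof -
    have "continuous_on {0..yd} \<beta>" "continuous_on {0..yd} \<chi>"
      using cb cchi by (auto elim: continuous_on_subset)
    then show ?thesis unfolding g_def using delta_pos by (intro continuous_intros) auto
  qed
  have g0: "g 0 > 0"
  proof -
    have "\<chi> 0 = 0" using chi_def by auto
    moreover have "\<beta> 0 > 0" using beta_pos by auto
    moreover have "2 * (\<beta> 0)\<^sup>2 / \<delta> \<ge> 0" using delta_pos by simp
    ultimately show ?thesis using delta_pos unfolding g_def by linarith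
  qed
  have gyd: "g yd < 0" using H2 byd delta_pos by (simp add: g_def yd_def power2_eq_square)
  obtain ys where ys: "0 \<le> ys" "ys \<le> yd" "g ys = 0"
    using IVT2'[of g yd 0 0] cg gyd g0 byd by auto
  have ys0: "0 < ys" using ys g0 by (metis less_irrefl order_le_less)
  have ysd: "ys < yd" using ys gyd by (metis less_irrefl order_le_less)
  have bys: "\<delta> < \<beta> ys" "\<beta> ys < \<beta> 0" using beta_strict_dec ys0 ysd byd by auto
  define us where "us = \<delta> / \<beta> ys"
  define ts where "ts = - ln ((us + 1) / 2) / \<delta>"
  have b0: "\<beta> 0 > 0" using beta_pos by auto
  have tb: "tau_bar \<delta> \<beta> = - ln ((\<delta> + \<beta> 0) / (2 * \<beta> 0)) / \<delta>"
    unfolding tau_bar_def using delta_pos b0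
    by (simp add: ln_div divide_simps)
  have us1: "us < 1" using bys delta_pos by (simp add: us_def)
  have us0: "us > \<delta> / \<beta> 0" unfolding us_def using bys delta_pos b0
    by (simp add: divide_strict_left_mono)
  have uspos: "us > 0" using delta_pos bys by (simp add: us_def)
  have low: "(\<delta> + \<beta> 0) / (2 * \<beta> 0) = (\<delta> / \<beta> 0 + 1) / 2" using b0 by (simp add: field_simps)
  have Pts: "P ts"
    unfolding P_def
  proof (intro conjI allI impI)
    show "0 < ts"
    proof -
      have "ln ((us + 1) / 2) < 0" using us1 uspos by (intro ln_less_zero) auto
      then show ?thesis using delta_pos by (simp add: ts_def divide_neg_pos)
    qed
    have "ln ((\<delta> / \<beta> 0 + 1) / 2) < ln ((us + 1) / 2)"
    proof -
      have q: "0 < \<delta> / \<beta> 0" using delta_pos b0 by simp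
      have "(\<delta> / \<beta> 0 + 1) / 2 < (us + 1) / 2" using us0 by (intro divide_strict_right_mono) auto
      moreover have "0 < (\<delta> / \<beta> 0 + 1) / 2" using q by (intro divide_pos_pos) auto
      ultimately show ?thesis using uspos by (subst ln_less_cancel_iff) auto
    qed
    then show "ts < tau_bar \<delta> \<beta>" unfolding tb ts_def low using delta_pos
      by (simp add: divide_strict_right_mono)
  next
    fix \<tau> assume t: "0 \<le> \<tau> \<and> \<tau> < tau_bar \<delta> \<beta>"
    define e where "e = exp (- \<delta> * \<tau>)"
    define u where "u = 2 * e - 1"
    have "- \<delta> * \<tau> > ln ((\<delta> / \<beta> 0 + 1) / 2)"
      using t delta_pos unfolding tb low by (simp add: field_simps)
    hence "e > (\<delta> / \<beta> 0 + 1) / 2" unfolding e_def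
      using delta_pos b0 by (metis exp_less_cancel_iff exp_ln divide_pos_pos add_pos_pos zero_less_one zero_less_numeral)
    hence ul: "u > \<delta> / \<beta> 0" by (simp add: u_def)
    have "e \<le> 1" unfolding e_def using t delta_pos by simp
    hence uh: "u \<le> 1" by (simp add: u_def)
    have upos: "u > 0" using ul delta_pos b0 by (smt (verit) divide_pos_pos)
    define v where "v = \<delta> / u"
    have vpos: "v > 0" using upos delta_pos by (simp add: v_def)
    have vd: "v \<ge> \<delta>" using uh upos delta_pos by (simp add: v_def field_simps)
    have vb: "v < \<beta> 0" using ul upos delta_pos b0 by (simp add: v_def field_simps)
    define y where "y = beta_inv \<beta> v"
    have hby: "\<beta> y = v" "y \<ge> 0" using binv[of v] vpos vb by (auto simp: y_def)
    have yyd: "y \<le> yd" using mono_le[of y yd] hby byd vd by auto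
    have E: "4 * \<delta> * e / u + u * \<chi> y < 0 \<longleftrightarrow> g y < 0"
    proof -
      have "4 * \<delta> * e / u + u * \<chi> y = (\<delta> / v) * g y"
      proof -
        have ee: "e = (u + 1) / 2" by (simp add: u_def)
        have "(\<delta> / v) * g y = u * (2 * v + 2 * v * v / \<delta> + \<chi> y)"
          unfolding g_def hby(1) power2_eq_square using delta_pos upos by (simp add: v_def)
        also have "\<dots> = 2 * \<delta> + 2 * \<delta> / u + u * \<chi> y"
          using delta_pos upos by (simp add: v_def field_simps)
        also have "2 * \<delta> + 2 * \<delta> / u = 4 * \<delta> * e / u"
          unfolding ee using upos by (simp add: field_simps)
        finally show ?thesis by simp
      qed
      moreover have "\<delta> / v > 0" using delta_pos vpos by simp
      ultimately show ?thesis by (metis mult_less_0_iff mult_pos_pos not_less_iff_gr_or_eq)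
    qed
    have G: "g y < 0 \<longleftrightarrow> ys < y"
    proof
      assume "g y < 0"
      then show "ys < y" using gdec[of y ys] ys by (metis hby(2) linorder_not_less order_le_less less_irrefl)
    next
      assume "ys < y" then show "g y < 0" using gdec[of ys y] ys yyd by auto
    qed
    have Y: "ys < y \<longleftrightarrow> v < \<beta> ys"
    proof
      assume "ys < y" then show "v < \<beta> ys" using beta_strict_dec ys hby by auto
    next
      assume "v < \<beta> ys" then show "ys < y" using mono_le[of ys y] ys hby by (cases "y = ys") auto
    qed
    have V: "v < \<beta> ys \<longleftrightarrow> us < u"
      unfolding v_def us_def using upos delta_pos bys by (simp add: field_simps)
    have U: "us < u \<longleftrightarrow> ln ((us + 1) / 2) < - \<delta> * \<tau>"
    proof -
      have "us < u \<longleftrightarrow> (us + 1) / 2 < e" by (simp add: u_def; linarith)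
      also have "\<dots> \<longleftrightarrow> ln ((us + 1) / 2) < ln e" using uspos e_def by (subst ln_less_cancel_iff) auto
      finally show ?thesis by (simp add: e_def)
    qed
    have T: "ln ((us + 1) / 2) < - \<delta> * \<tau> \<longleftrightarrow> \<tau> < ts"
      unfolding ts_def using delta_pos by (simp add: field_simps; linarith)
    show "(4 * \<delta> * exp (- \<delta> * \<tau>) / (2 * exp (- \<delta> * \<tau>) - 1)
                 + (2 * exp (- \<delta> * \<tau>) - 1)
                   * \<chi> (beta_inv \<beta> (\<delta> / (2 * exp (- \<delta> * \<tau>) - 1))) < 0
               \<longleftrightarrow> \<tau> < ts)"
      using E G Y V U T unfolding e_def u_def v_def y_def by simp
  qed
  have uniq: "a = b" if "P a" "P b" for a b
  proof (rule ccontr)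
    assume "a \<noteq> b"
    then consider "a < b" | "b < a" by linarith
    then show False
    proof cases
      case 1
      then show False using that unfolding P_def by (metis less_irrefl order_less_imp_le)
    next
      case 2
      then show False using that unfolding P_def by (metis less_irrefl order_less_imp_le)
    qed
  qed
  show ?thesis using Pts uniq unfolding P_def[symmetric] by blast
qed

end
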